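(* Let $\Omega\subset\mathbb{R}^n$ be a bounded simply connected open set with smooth boundary, $\sigma_0\in C^2(\overline{\Omega})$ with $\sigma_0>0$ on $\overline{\Omega}$, $f\in C^{2,\alpha}(\partial\Omega)$, and let $u_0$ solve $\nabla\cdot\sigma_0\nabla u_0=0$ in $\Omega$, $u_0|_{\partial\Omega}=f$, with $\nabla u_0\neq0$ on $\overline{\Omega}$. Fix $p>0$. For $h\in C^2(\overline{\Omega})$ set $\rho=h/\sigma_0$ and $$d F_{\sigma_0}(h)=h|\nabla u_0|^p+p|\nabla u_0|^{p-2}\sigma_0\nabla u_0\cdot\nabla v_0,$$ where $v_0$ solves $\nabla\cdot\sigma_0\nabla v_0=-\nabla\cdot(h\nabla u_0)$ in $\Omega$, $v_0|_{\partial\Omega}=0$. Then $$\sigma_0\,T_0\!\left(\frac{dF_{\sigma_0}(h)}{\sigma_0|\nabla u_0|^p}\right)=-L\,\Delta_{\sigma_0,D}^{-1}\big(\sigma_0T_0\rho\big),$$ where $T_0=\nabla u_0\cdot\nabla$, $\Delta_{\sigma_0,D}$ is the Dirichlet realization of $\Delta_{\sigma_0}=\nabla\cdot\sigma_0\nabla$ in $\Omega$, and $L$ is the differential operator $$Lv=-\nabla\cdot\sigma_0\nabla v+p\,\nabla\cdot\left(\sigma_0\frac{\nabla u_0\cdot\nabla v}{|\nabla u_0|^2}\nabla u_0\right).$$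
   Context: $dF_{\sigma_0}$ is the differential at $\sigma_0$ of $F(\sigma)=\sigma|\nabla u_\sigma|^p$, with $u_\sigma$ the $\sigma$-harmonic function with boundary data $f$; $h$ plays the role of $\sigma-\sigma_0$ and $\rho=(\sigma-\sigma_0)/\sigma_0$. *)

theory Defs
  imports "HOL-Analysis.Analysis"
begin

definition dpart :: "'a::euclidean_space \<Rightarrow> ('a \<Rightarrow> real) \<Rightarrow> 'a \<Rightarrow> real" where
  "dpart i u x = frechet_derivative u (at x) i"

definition grad :: "('a::euclidean_space \<Rightarrow> real) \<Rightarrow> 'a \<Rightarrow> 'a" where
  "grad u x = (\<Sum>i\<in>Basis. dpart i u x *\<^sub>R i)"

definition divg :: "('a::euclidean_space \<Rightarrow> 'a) \<Rightarrow> 'a \<Rightarrow> real" where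
  "divg F x = (\<Sum>i\<in>Basis. frechet_derivative F (at x) i \<bullet> i)"

fun Ck_on :: "nat \<Rightarrow> 'a::euclidean_space set \<Rightarrow> ('a \<Rightarrow> real) \<Rightarrow> bool" where
  "Ck_on 0 U u = continuous_on U u"
| "Ck_on (Suc k) U u = (continuous_on U u \<and> (\<forall>x\<in>U. u differentiable (at x)) \<and>
      (\<forall>i\<in>Basis. Ck_on k U (dpart i u)))"

definition smooth_on :: "'a::euclidean_space set \<Rightarrow> ('a \<Rightarrow> real) \<Rightarrow> bool" where
  "smooth_on U u = (\<forall>k. Ck_on k U u)"

text \<open>C^2(closure of an open bounded set): C^2 in the interior with all derivatives of
  order \<le> 2 uniformly continuous (equivalently, continuously extendable to the closure);
  the function itself is continuous on the closure.\<close>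
definition C2_closure :: "'a::euclidean_space set \<Rightarrow> ('a \<Rightarrow> real) \<Rightarrow> bool" where
  "C2_closure \<Omega> u = (Ck_on 2 \<Omega> u \<and> continuous_on (closure \<Omega>) u \<and>
      uniformly_continuous_on \<Omega> u \<and>
      (\<forall>i\<in>Basis. uniformly_continuous_on \<Omega> (dpart i u)) \<and>
      (\<forall>i\<in>Basis. \<forall>j\<in>Basis. uniformly_continuous_on \<Omega> (dpart j (dpart i u))))"

definition smooth_boundary :: "'a::euclidean_space set \<Rightarrow> bool" where
  "smooth_boundary \<Omega> = (\<forall>z\<in>frontier \<Omega>. \<exists>U \<phi>. open U \<and> z \<in> U \<and> smooth_on U \<phi> \<and>
      (\<forall>x\<in>U. grad \<phi> x \<noteq> 0) \<and> \<Omega> \<inter> U = {x\<in>U. \<phi> x < 0})"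

definition C2alpha_boundary :: "real \<Rightarrow> 'a::euclidean_space set \<Rightarrow> ('a \<Rightarrow> real) \<Rightarrow> bool" where
  "C2alpha_boundary \<alpha> \<Omega> f = (\<exists>F. Ck_on 2 UNIV F \<and>
      (\<forall>i\<in>Basis. \<forall>j\<in>Basis. \<exists>M. \<forall>x y.
          \<bar>dpart j (dpart i F) x - dpart j (dpart i F) y\<bar> \<le> M * dist x y powr \<alpha>) \<and>
      (\<forall>x\<in>frontier \<Omega>. F x = f x))"

definition sigma_lap :: "('a::euclidean_space \<Rightarrow> real) \<Rightarrow> ('a \<Rightarrow> real) \<Rightarrow> 'a \<Rightarrow> real" where
  "sigma_lap \<sigma> v x = divg (\<lambda>y. \<sigma> y *\<^sub>R grad v y) x"

text \<open>Classical solutions of the Dirichlet problem Delta_sigma w = g in Omega, w = 0 on the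
  boundary; w is normalised to vanish outside Omega so that it is a unique function.\<close>
definition dirichlet_sol :: "'a::euclidean_space set \<Rightarrow> ('a \<Rightarrow> real) \<Rightarrow> ('a \<Rightarrow> real) \<Rightarrow> ('a \<Rightarrow> real) \<Rightarrow> bool" where
  "dirichlet_sol \<Omega> \<sigma> g w = (Ck_on 2 \<Omega> w \<and> continuous_on (closure \<Omega>) w \<and>
      (\<forall>x\<in>\<Omega>. sigma_lap \<sigma> w x = g x) \<and> (\<forall>x. x \<notin> \<Omega> \<longrightarrow> w x = 0))"

definition dirichlet_inv :: "'a::euclidean_space set \<Rightarrow> ('a \<Rightarrow> real) \<Rightarrow> ('a \<Rightarrow> real) \<Rightarrow> 'a \<Rightarrow> real" where
  "dirichlet_inv \<Omega> \<sigma> g = (THE w. dirichlet_sol \<Omega> \<sigma> g w)"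

definition Top :: "('a::euclidean_space \<Rightarrow> real) \<Rightarrow> ('a \<Rightarrow> real) \<Rightarrow> 'a \<Rightarrow> real" where
  "Top u0 w x = grad u0 x \<bullet> grad w x"

definition Lop :: "('a::euclidean_space \<Rightarrow> real) \<Rightarrow> ('a \<Rightarrow> real) \<Rightarrow> real \<Rightarrow> ('a \<Rightarrow> real) \<Rightarrow> 'a \<Rightarrow> real" where
  "Lop \<sigma> u0 p v x = - divg (\<lambda>y. \<sigma> y *\<^sub>R grad v y) x
      + p * divg (\<lambda>y. (\<sigma> y * (grad u0 y \<bullet> grad v y) / (norm (grad u0 y))\<^sup>2) *\<^sub>R grad u0 y) x"

definition dF :: "('a::euclidean_space \<Rightarrow> real) \<Rightarrow> ('a \<Rightarrow> real) \<Rightarrow> real \<Rightarrow> ('a \<Rightarrow> real) \<Rightarrow> ('a \<Rightarrow> real) \<Rightarrow> 'a \<Rightarrow> real" where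
  "dF \<sigma> u0 p h v0 x = h x * norm (grad u0 x) powr p
      + p * norm (grad u0 x) powr (p - 2) * \<sigma> x * (grad u0 x \<bullet> grad v0 x)"

end

theory Submission
  imports Defs
begin


lemma fd_cong_open:
  assumes "open S" "x \<in> S" "\<And>y. y \<in> S \<Longrightarrow> f y = g y"
  shows "frechet_derivative f (at x) = frechet_derivative g (at x)"
proof -
  have "\<And>D. (f has_derivative D) (at x) \<longleftrightarrow> (g has_derivative D) (at x)"
    using has_derivative_transform_within_open[OF _ assms(1,2), of f _ _ g]
      has_derivative_transform_within_open[OF _ assms(1,2), of g _ _ f] assms(3) by metis
  then show ?thesis unfolding frechet_derivative_def by simp
qed

lemma dpart_cong_open:
  assumes "open S" "x \<in> S" "\<And>y. y \<in> S \<Longrightarrow> f y = g y"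
  shows "dpart i f x = dpart i g x"
  unfolding dpart_def using fd_cong_open[OF assms] by simp

lemma grad_cong_open:
  assumes "open S" "x \<in> S" "\<And>y. y \<in> S \<Longrightarrow> f y = g y"
  shows "grad f x = grad g x"
  unfolding grad_def using dpart_cong_open[OF assms] by simp

lemma divg_cong_open:
  assumes "open S" "x \<in> S" "\<And>y. y \<in> S \<Longrightarrow> F y = G y"
  shows "divg F x = divg G x"
  unfolding divg_def using fd_cong_open[OF assms] by simp

lemma differentiable_cong_open:
  assumes "open S" "x \<in> S" "\<And>y. y \<in> S \<Longrightarrow> f y = g y" "f differentiable at x"
  shows "g differentiable at x"
  using assms has_derivative_transform_within_open unfolding differentiable_def by metis

lemma grad_of_deriv:
  fixes f :: "'a::euclidean_space \<Rightarrow> real"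
  assumes "(f has_derivative (\<lambda>v. G \<bullet> v)) (at x)"
  shows "grad f x = G"
proof -
  have "frechet_derivative f (at x) = (\<lambda>v. G \<bullet> v)" using frechet_derivative_at[OF assms] by simp
  then have "grad f x = (\<Sum>i\<in>Basis. (G \<bullet> i) *\<^sub>R i)" unfolding grad_def dpart_def by simp
  also have "\<dots> = G" by (rule euclidean_representation)
  finally show ?thesis .
qed

lemma grad_inner_basis:
  fixes f :: "'a::euclidean_space \<Rightarrow> real"
  assumes "i \<in> Basis"
  shows "grad f x \<bullet> i = dpart i f x"
proof -
  have "grad f x \<bullet> i = (\<Sum>j\<in>Basis. dpart j f x * (j \<bullet> i))"
    unfolding grad_def by (simp add: inner_sum_left)
  also have "\<dots> = (\<Sum>j\<in>Basis. if j = i then dpart j f x else 0)"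
    by (rule sum.cong) (auto simp: inner_Basis assms)
  also have "\<dots> = dpart i f x" using assms by simp
  finally show ?thesis .
qed

lemma deriv_grad:
  fixes f :: "'a::euclidean_space \<Rightarrow> real"
  assumes "f differentiable at x"
  shows "(f has_derivative (\<lambda>v. grad f x \<bullet> v)) (at x)"
proof -
  let ?D = "frechet_derivative f (at x)"
  have d: "(f has_derivative ?D) (at x)" using assms frechet_derivative_works by blast
  have lin: "linear ?D" using has_derivative_linear[OF d] .
  have "?D v = grad f x \<bullet> v" for v
  proof -
    have "?D v = ?D (\<Sum>i\<in>Basis. (v \<bullet> i) *\<^sub>R i)" by (simp only: euclidean_representation)
    also have "\<dots> = (\<Sum>i\<in>Basis. (v \<bullet> i) * ?D i)"
      using lin by (simp only: linear_sum linear_scale o_def real_scaleR_def)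
    also have "\<dots> = (\<Sum>i\<in>Basis. ?D i * (i \<bullet> v))"
      by (rule sum.cong) (auto simp: inner_commute)
    also have "\<dots> = grad f x \<bullet> v"
      unfolding grad_def dpart_def by (simp only: inner_sum_left inner_scaleR_left)
    finally show ?thesis .
  qed
  then have "?D = (\<lambda>v. grad f x \<bullet> v)" by auto
  then show ?thesis using d by simp
qed

lemma dpart_eq_grad:
  fixes f :: "'a::euclidean_space \<Rightarrow> real"
  assumes "f differentiable at x"
  shows "dpart i f x = grad f x \<bullet> i"
proof -
  have "frechet_derivative f (at x) = (\<lambda>v. grad f x \<bullet> v)"
    using frechet_derivative_at[OF deriv_grad[OF assms]] by simp
  then show ?thesis by (simp add: dpart_def)
qed

lemma divg_of_deriv:
  assumes "(F has_derivative D) (at x)"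
  shows "divg F x = (\<Sum>i\<in>Basis. D i \<bullet> i)"
  using frechet_derivative_at[OF assms] unfolding divg_def by simp

lemma divg_scaleR:
  fixes \<phi> :: "'a::euclidean_space \<Rightarrow> real"
  assumes "\<phi> differentiable at x" "V differentiable at x"
  shows "divg (\<lambda>y. \<phi> y *\<^sub>R V y) x = grad \<phi> x \<bullet> V x + \<phi> x * divg V x"
proof -
  let ?D = "frechet_derivative V (at x)"
  have dV: "(V has_derivative ?D) (at x)" using assms(2) frechet_derivative_works by blast
  have "((\<lambda>y. \<phi> y *\<^sub>R V y) has_derivative (\<lambda>h. \<phi> x *\<^sub>R ?D h + (grad \<phi> x \<bullet> h) *\<^sub>R V x)) (at x)"
    by (rule has_derivative_scaleR[OF deriv_grad[OF assms(1)] dV])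
  then have "divg (\<lambda>y. \<phi> y *\<^sub>R V y) x = (\<Sum>i\<in>Basis. (\<phi> x *\<^sub>R ?D i + (grad \<phi> x \<bullet> i) *\<^sub>R V x) \<bullet> i)"
    by (rule divg_of_deriv)
  also have "\<dots> = \<phi> x * (\<Sum>i\<in>Basis. ?D i \<bullet> i) + (\<Sum>i\<in>Basis. (grad \<phi> x \<bullet> i) * (V x \<bullet> i))"
    by (simp add: inner_add_left sum.distrib sum_distrib_left)
  also have "\<dots> = grad \<phi> x \<bullet> V x + \<phi> x * divg V x"
    unfolding divg_def using euclidean_inner[of "grad \<phi> x" "V x"] by simp
  finally show ?thesis .
qed

lemma divg_neg:
  assumes "F differentiable at x"
  shows "divg (\<lambda>y. - F y) x = - divg F x"
proof -
  let ?D = "frechet_derivative F (at x)"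
  have dV: "(F has_derivative ?D) (at x)" using assms frechet_derivative_works by blast
  have "((\<lambda>y. - F y) has_derivative (\<lambda>h. - ?D h)) (at x)" using has_derivative_minus[OF dV] .
  then have "divg (\<lambda>y. - F y) x = (\<Sum>i\<in>Basis. (- ?D i) \<bullet> i)" by (rule divg_of_deriv)
  then show ?thesis unfolding divg_def by (simp add: sum_negf)
qed

lemma grad_differentiable:
  fixes f :: "'a::euclidean_space \<Rightarrow> real"
  assumes "\<And>i. i \<in> Basis \<Longrightarrow> dpart i f differentiable at x"
  shows "grad f differentiable at x"
proof -
  have "grad f = (\<lambda>y. \<Sum>i\<in>Basis. dpart i f y *\<^sub>R i)" unfolding grad_def by (rule ext) simp
  moreover have "(\<lambda>y. \<Sum>i\<in>Basis. dpart i f y *\<^sub>R i) differentiable at x"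
    using assms by (intro differentiable_sum) (auto intro!: differentiable_scaleR)
  ultimately show ?thesis by simp
qed

lemma divg_grad:
  fixes f :: "'a::euclidean_space \<Rightarrow> real"
  assumes "\<And>i. i \<in> Basis \<Longrightarrow> dpart i f differentiable at x"
  shows "divg (grad f) x = (\<Sum>i\<in>Basis. dpart i (dpart i f) x)"
proof -
  have e: "grad f = (\<lambda>y. \<Sum>i\<in>Basis. dpart i f y *\<^sub>R i)" unfolding grad_def by (rule ext) simp
  have "\<And>i. i \<in> Basis \<Longrightarrow> ((\<lambda>y. dpart i f y *\<^sub>R i) has_derivative
      (\<lambda>v. (grad (dpart i f) x \<bullet> v) *\<^sub>R i)) (at x)"
    by (rule has_derivative_scaleR_left, rule deriv_grad, rule assms)
  then have "((\<lambda>y. \<Sum>i\<in>Basis. dpart i f y *\<^sub>R i) has_derivative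
      (\<lambda>v. \<Sum>i\<in>Basis. (grad (dpart i f) x \<bullet> v) *\<^sub>R i)) (at x)"
    by (rule has_derivative_sum)
  then have "divg (grad f) x = (\<Sum>j\<in>Basis. (\<Sum>i\<in>Basis. (grad (dpart i f) x \<bullet> j) *\<^sub>R i) \<bullet> j)"
    unfolding e by (rule divg_of_deriv)
  also have "\<dots> = (\<Sum>j\<in>Basis. grad (dpart j f) x \<bullet> j)"
  proof (rule sum.cong[OF refl])
    fix j :: 'a assume j: "j \<in> Basis"
    have "(\<Sum>i\<in>Basis. (grad (dpart i f) x \<bullet> j) *\<^sub>R i) \<bullet> j
       = (\<Sum>i\<in>Basis. (grad (dpart i f) x \<bullet> j) * (i \<bullet> j))"
      by (simp only: inner_sum_left inner_scaleR_left)
    also have "\<dots> = (\<Sum>i\<in>Basis. if i = j then grad (dpart i f) x \<bullet> j else 0)"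
      by (rule sum.cong) (auto simp: inner_Basis j)
    also have "\<dots> = grad (dpart j f) x \<bullet> j" using j by simp
    finally show "(\<Sum>i\<in>Basis. (grad (dpart i f) x \<bullet> j) *\<^sub>R i) \<bullet> j = grad (dpart j f) x \<bullet> j" .
  qed
  also have "\<dots> = (\<Sum>i\<in>Basis. dpart i (dpart i f) x)"
    by (rule sum.cong) (simp_all add: grad_inner_basis)
  finally show ?thesis .
qed

definition lap :: "('a::euclidean_space \<Rightarrow> real) \<Rightarrow> 'a \<Rightarrow> real" where
  "lap f x = (\<Sum>i\<in>Basis. dpart i (dpart i f) x)"

lemma sigma_lap_expand:
  fixes f :: "'a::euclidean_space \<Rightarrow> real"
  assumes "\<sigma> differentiable at x" "\<And>i. i \<in> Basis \<Longrightarrow> dpart i f differentiable at x"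
  shows "sigma_lap \<sigma> f x = \<sigma> x * lap f x + grad \<sigma> x \<bullet> grad f x"
  unfolding sigma_lap_def lap_def
  using divg_scaleR[OF assms(1) grad_differentiable[OF assms(2)]] divg_grad[OF assms(2)] by simp



lemma Ck_on_cong:
  assumes "open U" "\<And>y. y \<in> U \<Longrightarrow> f y = g y" "Ck_on k U f"
  shows "Ck_on k U g"
  using assms
proof (induction k arbitrary: f g)
  case 0
  then show ?case using continuous_on_cong by (metis Ck_on.simps(1))
next
  case (Suc k)
  have c: "continuous_on U g" using Suc.prems continuous_on_cong by (metis Ck_on.simps(2))
  have d: "\<forall>x\<in>U. g differentiable at x"
    using Suc.prems differentiable_cong_open by (metis Ck_on.simps(2))
  have "Ck_on k U (dpart i g)" if i: "i \<in> Basis" for i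
  proof -
    have "Ck_on k U (dpart i f)" using Suc.prems i by simp
    moreover have "\<And>y. y \<in> U \<Longrightarrow> dpart i f y = dpart i g y"
      using dpart_cong_open[OF Suc.prems(1)] Suc.prems(2) by metis
    ultimately show ?thesis using Suc.IH[OF Suc.prems(1)] by metis
  qed
  then show ?case using c d by simp
qed

lemma dpart_neg:
  fixes f :: "'a::euclidean_space \<Rightarrow> real"
  assumes "f differentiable at x"
  shows "dpart i (\<lambda>y. - f y) x = - dpart i f x"
proof -
  have "((\<lambda>y. - f y) has_derivative (\<lambda>v. - frechet_derivative f (at x) v)) (at x)"
    using has_derivative_minus assms frechet_derivative_works by blast
  then have "frechet_derivative (\<lambda>y. - f y) (at x) = (\<lambda>v. - frechet_derivative f (at x) v)"
    using frechet_derivative_at by metis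
  then show ?thesis unfolding dpart_def by simp
qed

lemma Ck_on_neg:
  fixes f :: "'a::euclidean_space \<Rightarrow> real"
  assumes "open U" "Ck_on k U f"
  shows "Ck_on k U (\<lambda>y. - f y)"
  using assms
proof (induction k arbitrary: f)
  case 0
  then show ?case by (simp add: continuous_on_minus)
next
  case (Suc k)
  have P: "continuous_on U f" "\<forall>x\<in>U. f differentiable at x" "\<forall>i\<in>Basis. Ck_on k U (dpart i f)"
    using Suc.prems(2) by simp_all
  have "Ck_on k U (dpart i (\<lambda>y. - f y))" if i: "i \<in> Basis" for i
  proof -
    have "Ck_on k U (dpart i f)" using P(3) i by blast
    then have ck: "Ck_on k U (\<lambda>y. - dpart i f y)" by (rule Suc.IH[OF Suc.prems(1)])
    have eq: "\<And>y. y \<in> U \<Longrightarrow> - dpart i f y = dpart i (\<lambda>y. - f y) y"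
    proof -
      fix y assume "y \<in> U"
      then have "f differentiable at y" using P(2) by blast
      then show "- dpart i f y = dpart i (\<lambda>y. - f y) y" by (rule dpart_neg[symmetric])
    qed
    show ?thesis by (rule Ck_on_cong[OF Suc.prems(1) eq ck])
  qed
  moreover have "continuous_on U (\<lambda>y. - f y)" using P(1) by (rule continuous_on_minus)
  moreover have "\<forall>x\<in>U. (\<lambda>y. - f y) differentiable at x" using P(2) by (simp add: differentiable_minus)
  ultimately show ?case by (simp only: Ck_on.simps) blast
qed

lemma Ck2_facts:
  assumes "Ck_on 2 U f" "x \<in> U"
  shows "f differentiable at x" "\<And>i. i \<in> Basis \<Longrightarrow> dpart i f differentiable at x"
    "continuous_on U f"
  using assms by (simp_all add: numeral_2_eq_2)

lemma line_deriv:
  fixes f :: "'a::euclidean_space \<Rightarrow> real"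
  assumes "f differentiable at (a + t *\<^sub>R v)"
  shows "((\<lambda>s. f (a + s *\<^sub>R v)) has_real_derivative dpart v f (a + t *\<^sub>R v)) (at t)"
proof -
  let ?D = "frechet_derivative f (at (a + t *\<^sub>R v))"
  have d: "(f has_derivative ?D) (at (a + t *\<^sub>R v))" using assms frechet_derivative_works by blast
  have l: "((\<lambda>s. a + s *\<^sub>R v) has_derivative (\<lambda>s. s *\<^sub>R v)) (at t)"
    by (intro derivative_eq_intros) auto
  have "((\<lambda>s. f (a + s *\<^sub>R v)) has_derivative (\<lambda>s. ?D (s *\<^sub>R v))) (at t)"
    using has_derivative_compose[OF l d] by simp
  moreover have "(\<lambda>s. ?D (s *\<^sub>R v)) = (\<lambda>s. ?D v * s)"
    using has_derivative_linear[OF d] by (simp add: linear_scale mult.commute)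
  ultimately show ?thesis unfolding has_field_derivative_def dpart_def by simp
qed

lemma second_deriv_max:
  fixes z :: "'a::euclidean_space \<Rightarrow> real"
  assumes S: "open S" "xm \<in> S" and mx: "\<And>y. y \<in> S \<Longrightarrow> z y \<le> z xm"
    and dz: "\<And>y. y \<in> S \<Longrightarrow> z differentiable at y"
    and dd: "dpart i z differentiable at xm" and z0: "dpart i z xm = 0"
  shows "dpart i (dpart i z) xm \<le> 0"
proof (rule ccontr)
  assume "\<not> ?thesis"
  then have c: "dpart i (dpart i z) xm > 0" by simp
  obtain r where r: "r > 0" "ball xm r \<subseteq> S" using S openE by metis
  define k where "k t = dpart i z (xm + t *\<^sub>R i)" for t
  have "DERIV k 0 :> dpart i (dpart i z) xm"
    using line_deriv[of "dpart i z" xm 0 i] dd unfolding k_def by simp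
  then obtain d where d: "d > 0" "\<And>h. h > 0 \<Longrightarrow> h < d \<Longrightarrow> k 0 < k (0 + h)"
    using DERIV_pos_inc_right[OF _ c] by metis
  have k0: "k 0 = 0" using z0 unfolding k_def by simp
  define t1 where "t1 = min (d/2) (r / (norm i + 1))"
  have "r / (norm i + 1) > 0" using r by (simp add: add_nonneg_pos)
  then have t1: "t1 > 0" "t1 < d" using d unfolding t1_def by auto
  have inS: "xm + t *\<^sub>R i \<in> S" if "0 \<le> t" "t \<le> t1" for t
  proof -
    have "t * norm i \<le> (r / (norm i + 1)) * norm i"
      using that unfolding t1_def by (intro mult_right_mono) auto
    also have "\<dots> < r"
    proof -
      have "r * norm i < r * (norm i + 1)" using r by simp
      moreover have "norm i + 1 > 0" by (simp add: add_nonneg_pos)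
      ultimately show ?thesis by (simp add: divide_less_eq mult.commute)
    qed
    finally have "norm (t *\<^sub>R i) < r" using that by simp
    then show ?thesis using r by (auto simp: dist_norm)
  qed
  have der: "DERIV (\<lambda>s. z (xm + s *\<^sub>R i)) t :> k t" if "0 \<le> t" "t \<le> t1" for t
  proof -
    have "z differentiable at (xm + t *\<^sub>R i)" using dz inS that by blast
    then show ?thesis unfolding k_def by (rule line_deriv)
  qed
  then obtain \<xi> where xi: "0 < \<xi>" "\<xi> < t1" "z (xm + t1 *\<^sub>R i) - z (xm + 0 *\<^sub>R i) = (t1 - 0) * k \<xi>"
    using MVT2[OF t1(1) der] by blast
  have "k \<xi> > 0" using d(2)[of \<xi>] xi t1 k0 by simp
  then have "t1 * k \<xi> > 0" using t1 by simp
  then have "z (xm + t1 *\<^sub>R i) > z xm" using xi by simp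
  moreover have "z (xm + t1 *\<^sub>R i) \<le> z xm" using mx inS t1 by simp
  ultimately show False by simp
qed



lemma grad_comb:
  fixes f g k :: "'a::euclidean_space \<Rightarrow> real"
  assumes "f differentiable at x" "g differentiable at x" "k differentiable at x"
  shows "grad (\<lambda>y. f y - g y + c * k y) x = grad f x - grad g x + c *\<^sub>R grad k x"
proof -
  have "((\<lambda>y. f y - g y + c * k y) has_derivative
     (\<lambda>v. grad f x \<bullet> v - grad g x \<bullet> v + c * (grad k x \<bullet> v))) (at x)"
    using deriv_grad[OF assms(1)] deriv_grad[OF assms(2)] deriv_grad[OF assms(3)]
    by (intro has_derivative_add has_derivative_diff has_derivative_mult_right)
  moreover have "(\<lambda>v. grad f x \<bullet> v - grad g x \<bullet> v + c * (grad k x \<bullet> v))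
      = (\<lambda>v. (grad f x - grad g x + c *\<^sub>R grad k x) \<bullet> v)"
    by (rule ext) (simp add: inner_diff_left inner_add_left)
  ultimately show ?thesis using grad_of_deriv by metis
qed

lemma dpart_comb:
  fixes f g k :: "'a::euclidean_space \<Rightarrow> real"
  assumes "f differentiable at x" "g differentiable at x" "k differentiable at x"
  shows "dpart i (\<lambda>y. f y - g y + c * k y) x = dpart i f x - dpart i g x + c * dpart i k x"
proof -
  have d: "(\<lambda>y. f y - g y + c * k y) differentiable at x" using assms by simp
  show ?thesis
    using dpart_eq_grad[OF d, of i] grad_comb[OF assms, of c]
      dpart_eq_grad[OF assms(1), of i] dpart_eq_grad[OF assms(2), of i] dpart_eq_grad[OF assms(3), of i]
    by (simp add: inner_diff_left inner_add_left)
qed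

lemma phi_deriv:
  fixes b :: "'a::euclidean_space"
  shows "((\<lambda>y. exp (\<gamma> * (y \<bullet> b))) has_derivative
          (\<lambda>v. ((\<gamma> * exp (\<gamma> * (x \<bullet> b))) *\<^sub>R b) \<bullet> v)) (at x)"
proof -
  have "((\<lambda>y. exp (\<gamma> * (y \<bullet> b))) has_derivative
          (\<lambda>v. exp (\<gamma> * (x \<bullet> b)) * (\<gamma> * (v \<bullet> b)))) (at x)"
    by (auto intro!: derivative_eq_intros)
  moreover have "(\<lambda>v. exp (\<gamma> * (x \<bullet> b)) * (\<gamma> * (v \<bullet> b))) = (\<lambda>v. ((\<gamma> * exp (\<gamma> * (x \<bullet> b))) *\<^sub>R b) \<bullet> v)"
    by (rule ext) (simp add: inner_commute)
  ultimately show ?thesis by simp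
qed

lemma phi_facts:
  fixes b :: "'a::euclidean_space" and \<gamma> :: real
  assumes b: "b \<in> Basis"
  defines "\<phi> \<equiv> (\<lambda>y. exp (\<gamma> * (y \<bullet> b)))"
  shows "\<phi> differentiable at x" "grad \<phi> x = (\<gamma> * \<phi> x) *\<^sub>R b"
    "\<And>i. dpart i \<phi> = (\<lambda>y. (\<gamma> * (b \<bullet> i)) * \<phi> y)"
    "\<And>i. dpart i \<phi> differentiable at x"
    "lap \<phi> x = \<gamma>^2 * \<phi> x"
proof -
  show d: "\<phi> differentiable at x" unfolding \<phi>_def using phi_deriv differentiable_def by blast
  show g: "grad \<phi> x = (\<gamma> * \<phi> x) *\<^sub>R b" unfolding \<phi>_def using phi_deriv grad_of_deriv by blast
  have dp: "dpart i \<phi> = (\<lambda>y. (\<gamma> * (b \<bullet> i)) * \<phi> y)" for i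
  proof
    fix y
    have "\<phi> differentiable at y" unfolding \<phi>_def using phi_deriv differentiable_def by blast
    then have "dpart i \<phi> y = grad \<phi> y \<bullet> i" by (rule dpart_eq_grad)
    also have "grad \<phi> y = (\<gamma> * \<phi> y) *\<^sub>R b" unfolding \<phi>_def using phi_deriv grad_of_deriv by blast
    finally show "dpart i \<phi> y = (\<gamma> * (b \<bullet> i)) * \<phi> y" by simp
  qed
  then show "\<And>i. dpart i \<phi> = (\<lambda>y. (\<gamma> * (b \<bullet> i)) * \<phi> y)" .
  show dd: "\<And>i. dpart i \<phi> differentiable at x" using dp d by simp
  have "dpart i (dpart i \<phi>) x = (\<gamma> * (b \<bullet> i)) * ((\<gamma> * (b \<bullet> i)) * \<phi> x)" for i
  proof -
    have "dpart i (dpart i \<phi>) x = grad (\<lambda>y. (\<gamma> * (b \<bullet> i)) * \<phi> y) x \<bullet> i"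
      using dpart_eq_grad dd dp by metis
    also have "grad (\<lambda>y. (\<gamma> * (b \<bullet> i)) * \<phi> y) x = (\<gamma> * (b \<bullet> i)) *\<^sub>R grad \<phi> x"
      using grad_comb[of "\<lambda>y. 0" x "\<lambda>y. 0" \<phi> "\<gamma> * (b \<bullet> i)"] d by simp
    finally show ?thesis using g by simp
  qed
  then have "lap \<phi> x = (\<Sum>i\<in>Basis. (\<gamma> * (b \<bullet> i)) * ((\<gamma> * (b \<bullet> i)) * \<phi> x))"
    unfolding lap_def by simp
  also have "\<dots> = (\<Sum>i\<in>Basis. if i = b then \<gamma>^2 * \<phi> x else 0)"
    by (rule sum.cong) (auto simp: inner_Basis b power2_eq_square)
  also have "\<dots> = \<gamma>^2 * \<phi> x" using b by simp
  finally show "lap \<phi> x = \<gamma>^2 * \<phi> x" .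
qed



lemma max_principle:
  fixes \<Omega> :: "'a::euclidean_space set" and \<sigma> w1 w2 :: "'a \<Rightarrow> real"
  assumes bd: "bounded \<Omega>" and op: "open \<Omega>"
    and sd: "\<And>y. y \<in> \<Omega> \<Longrightarrow> \<sigma> differentiable at y"
    and sb: "\<And>y b. y \<in> \<Omega> \<Longrightarrow> b \<in> Basis \<Longrightarrow> \<bar>dpart b \<sigma> y\<bar> \<le> B"
    and sp: "\<And>y. y \<in> closure \<Omega> \<Longrightarrow> \<sigma> y > 0" and sc: "continuous_on (closure \<Omega>) \<sigma>"
    and w1: "Ck_on 2 \<Omega> w1" and w2: "Ck_on 2 \<Omega> w2"
    and c1: "continuous_on (closure \<Omega>) w1" and c2: "continuous_on (closure \<Omega>) w2"
    and eq: "\<And>x. x \<in> \<Omega> \<Longrightarrow> sigma_lap \<sigma> w1 x = sigma_lap \<sigma> w2 x"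
    and bdry: "\<And>x. x \<in> frontier \<Omega> \<Longrightarrow> w1 x = w2 x"
    and x0: "x0 \<in> \<Omega>"
  shows "w1 x0 \<le> w2 x0"
proof (rule ccontr)
  assume neg: "\<not> ?thesis"
  define \<delta> where "\<delta> = w1 x0 - w2 x0"
  have \<delta>: "\<delta> > 0" using neg unfolding \<delta>_def by simp
  have cpt: "compact (closure \<Omega>)" using bd by (simp add: compact_closure)
  have ne: "closure \<Omega> \<noteq> {}" using x0 closure_subset by blast
  have x0c: "x0 \<in> closure \<Omega>" using x0 closure_subset by blast
  obtain xmin where xmin: "xmin \<in> closure \<Omega>" "\<And>y. y \<in> closure \<Omega> \<Longrightarrow> \<sigma> xmin \<le> \<sigma> y"
    using continuous_attains_inf[OF cpt ne sc] by blast
  define m where "m = \<sigma> xmin"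
  have m: "m > 0" using sp xmin unfolding m_def by simp
  obtain b :: 'a where b: "b \<in> Basis" using nonempty_Basis by blast
  define \<gamma> where "\<gamma> = (\<bar>B\<bar> + 1) / m"
  have \<gamma>: "\<gamma> > 0" using m unfolding \<gamma>_def by (simp add: add_nonneg_pos)
  define \<phi> where "\<phi> = (\<lambda>y. exp (\<gamma> * (y \<bullet> b)))"
  note pf = phi_facts[OF b, where \<gamma>=\<gamma>, folded \<phi>_def]
  have \<phi>c: "continuous_on (closure \<Omega>) \<phi>" unfolding \<phi>_def by (intro continuous_intros)
  obtain xM where xM: "xM \<in> closure \<Omega>" "\<And>y. y \<in> closure \<Omega> \<Longrightarrow> \<phi> y \<le> \<phi> xM"
    using continuous_attains_sup[OF cpt ne \<phi>c] by blast
  define M where "M = \<phi> xM"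
  have M: "M > 0" unfolding M_def \<phi>_def by simp
  define \<epsilon> where "\<epsilon> = \<delta> / (2 * M)"
  have \<epsilon>: "\<epsilon> > 0" "\<epsilon> * M = \<delta> / 2" using \<delta> M unfolding \<epsilon>_def by auto
  define z where "z = (\<lambda>y. w1 y - w2 y + \<epsilon> * \<phi> y)"
  have zc: "continuous_on (closure \<Omega>) z" unfolding z_def using c1 c2 \<phi>c by (intro continuous_intros)
  obtain xm where xm: "xm \<in> closure \<Omega>" "\<And>y. y \<in> closure \<Omega> \<Longrightarrow> z y \<le> z xm"
    using continuous_attains_sup[OF cpt ne zc] by blast
  have "z x0 > \<delta>" unfolding z_def \<delta>_def \<phi>_def using \<epsilon> by simp
  then have zxm: "z xm > \<delta>" using xm(2)[OF x0c] by simp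
  have xmO: "xm \<in> \<Omega>"
  proof (rule ccontr)
    assume "xm \<notin> \<Omega>"
    then have "xm \<in> frontier \<Omega>" using xm(1) op by (simp add: frontier_def interior_open)
    then have "z xm = \<epsilon> * \<phi> xm" using bdry unfolding z_def by simp
    also have "\<dots> \<le> \<epsilon> * M" unfolding M_def using xM(2)[OF xm(1)] \<epsilon> by simp
    finally show False using \<epsilon> zxm \<delta> by simp
  qed
  have mxO: "\<And>y. y \<in> \<Omega> \<Longrightarrow> z y \<le> z xm" using xm(2) closure_subset by blast
  note f1 = Ck2_facts[OF w1] and f2 = Ck2_facts[OF w2]
  have zd: "z differentiable at y" if "y \<in> \<Omega>" for y
    unfolding z_def using f1(1)[OF that] f2(1)[OF that] pf(1) by simp
  have gz: "grad z y = grad w1 y - grad w2 y + \<epsilon> *\<^sub>R grad \<phi> y" if "y \<in> \<Omega>" for y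
    unfolding z_def using grad_comb f1(1)[OF that] f2(1)[OF that] pf(1) by blast
  have dpz: "dpart i z y = dpart i w1 y - dpart i w2 y + \<epsilon> * dpart i \<phi> y" if "y \<in> \<Omega>" for y i
    unfolding z_def using dpart_comb f1(1)[OF that] f2(1)[OF that] pf(1) by blast
  have "(\<lambda>v. grad z xm \<bullet> v) = (\<lambda>v. 0)"
    using differential_zero_maxmin[OF xmO op deriv_grad[OF zd[OF xmO]]] mxO by blast
  then have "grad z xm \<bullet> grad z xm = 0" by metis
  then have gz0: "grad z xm = 0" by simp
  have dd: "dpart i (dpart i z) xm = dpart i (dpart i w1) xm - dpart i (dpart i w2) xm
              + \<epsilon> * dpart i (dpart i \<phi>) xm" if i: "i \<in> Basis" for i
  proof -
    have "dpart i (dpart i z) xm = dpart i (\<lambda>y. dpart i w1 y - dpart i w2 y + \<epsilon> * dpart i \<phi> y) xm"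
      by (rule dpart_cong_open[OF op xmO]) (rule dpz)
    also have "\<dots> = dpart i (dpart i w1) xm - dpart i (dpart i w2) xm + \<epsilon> * dpart i (dpart i \<phi>) xm"
      by (rule dpart_comb) (use f1(2)[OF xmO i] f2(2)[OF xmO i] pf(4) in auto)
    finally show ?thesis .
  qed
  have nonpos: "dpart i (dpart i z) xm \<le> 0" if i: "i \<in> Basis" for i
  proof (rule second_deriv_max[OF op xmO mxO zd])
    have dc: "(\<lambda>y. dpart i w1 y - dpart i w2 y + \<epsilon> * dpart i \<phi> y) differentiable at xm"
      using f1(2)[OF xmO i] f2(2)[OF xmO i] pf(4) by simp
    show "dpart i z differentiable at xm"
      by (rule differentiable_cong_open[OF op xmO _ dc]) (simp add: dpz)
    show "dpart i z xm = 0" using dpart_eq_grad[OF zd[OF xmO]] gz0 by simp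
  qed
  have lz: "lap z xm \<le> 0" unfolding lap_def using nonpos by (simp add: sum_nonpos)
  have lzeq: "lap z xm = lap w1 xm - lap w2 xm + \<epsilon> * lap \<phi> xm"
    unfolding lap_def using dd by (simp add: sum.distrib sum_subtractf sum_distrib_left)
  have e1: "sigma_lap \<sigma> w1 xm = \<sigma> xm * lap w1 xm + grad \<sigma> xm \<bullet> grad w1 xm"
    by (rule sigma_lap_expand[OF sd[OF xmO] f1(2)[OF xmO]])
  have e2: "sigma_lap \<sigma> w2 xm = \<sigma> xm * lap w2 xm + grad \<sigma> xm \<bullet> grad w2 xm"
    by (rule sigma_lap_expand[OF sd[OF xmO] f2(2)[OF xmO]])
  have gw: "grad w1 xm - grad w2 xm = - \<epsilon> *\<^sub>R grad \<phi> xm" using gz[OF xmO] gz0 by (simp add: algebra_simps)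
  have "0 = sigma_lap \<sigma> w1 xm - sigma_lap \<sigma> w2 xm" using eq[OF xmO] by simp
  also have "\<dots> = \<sigma> xm * (lap w1 xm - lap w2 xm) + grad \<sigma> xm \<bullet> (grad w1 xm - grad w2 xm)"
    using e1 e2 by (simp add: algebra_simps inner_diff_right)
  also have "\<dots> = \<sigma> xm * lap z xm - \<epsilon> * (\<sigma> xm * lap \<phi> xm + grad \<sigma> xm \<bullet> grad \<phi> xm)"
  proof -
    have A: "grad \<sigma> xm \<bullet> (grad w1 xm - grad w2 xm) = - \<epsilon> * (grad \<sigma> xm \<bullet> grad \<phi> xm)"
      using gw by simp
    have B: "lap w1 xm - lap w2 xm = lap z xm - \<epsilon> * lap \<phi> xm" using lzeq by simp
    show ?thesis by (simp only: A B) (simp add: algebra_simps)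
  qed
  finally have key: "\<sigma> xm * lap z xm = \<epsilon> * (\<sigma> xm * lap \<phi> xm + grad \<sigma> xm \<bullet> grad \<phi> xm)" by simp
  have sxm: "\<sigma> xm \<ge> m" "\<sigma> xm > 0" using xmin(2) sp xm(1) unfolding m_def by auto
  have "grad \<sigma> xm \<bullet> grad \<phi> xm = \<gamma> * \<phi> xm * dpart b \<sigma> xm"
    using pf(2) grad_inner_basis[OF b] by (simp add: \<phi>_def)
  then have S: "\<sigma> xm * lap \<phi> xm + grad \<sigma> xm \<bullet> grad \<phi> xm = \<gamma> * \<phi> xm * (\<gamma> * \<sigma> xm + dpart b \<sigma> xm)"
    using pf(5) by (simp add: algebra_simps power2_eq_square \<phi>_def)
  have "\<gamma> * \<sigma> xm \<ge> \<gamma> * m" using sxm \<gamma> by simp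
  moreover have "\<gamma> * m = \<bar>B\<bar> + 1" unfolding \<gamma>_def using m by simp
  moreover have "\<bar>dpart b \<sigma> xm\<bar> \<le> B" using sb[OF xmO b] .
  ultimately have "\<gamma> * \<sigma> xm + dpart b \<sigma> xm > 0" by linarith
  moreover have "\<gamma> * \<phi> xm > 0" using \<gamma> unfolding \<phi>_def by simp
  ultimately have "\<sigma> xm * lap \<phi> xm + grad \<sigma> xm \<bullet> grad \<phi> xm > 0" using S by simp
  then have "\<sigma> xm * lap z xm > 0" using key \<epsilon> by simp
  moreover have "\<sigma> xm * lap z xm \<le> 0" using lz sxm by (simp add: mult_nonneg_nonpos)
  ultimately show False by simp
qed



lemma grad_neg:
  fixes f :: "'a::euclidean_space \<Rightarrow> real"
  assumes "f differentiable at x"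
  shows "grad (\<lambda>y. - f y) x = - grad f x"
proof -
  have "((\<lambda>y. - f y) has_derivative (\<lambda>v. - (grad f x \<bullet> v))) (at x)"
    using has_derivative_minus[OF deriv_grad[OF assms]] .
  moreover have "(\<lambda>v. - (grad f x \<bullet> v)) = (\<lambda>v. (- grad f x) \<bullet> v)" by auto
  ultimately show ?thesis using grad_of_deriv by metis
qed

lemma div_h_gradu:
  fixes \<sigma> h u :: "'a::euclidean_space \<Rightarrow> real"
  assumes op: "open \<Omega>" and x: "x \<in> \<Omega>"
    and sd: "\<sigma> differentiable at x" and hd: "h differentiable at x"
    and s0: "\<And>y. y \<in> \<Omega> \<Longrightarrow> \<sigma> y \<noteq> 0"
    and ud: "\<And>i. i \<in> Basis \<Longrightarrow> dpart i u differentiable at x"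
    and lu: "sigma_lap \<sigma> u x = 0"
  shows "divg (\<lambda>y. h y *\<^sub>R grad u y) x = \<sigma> x * (grad u x \<bullet> grad (\<lambda>z. h z / \<sigma> z) x)"
proof -
  have "divg (\<lambda>y. h y *\<^sub>R grad u y) x = divg (\<lambda>y. (h y / \<sigma> y) *\<^sub>R (\<sigma> y *\<^sub>R grad u y)) x"
    by (rule divg_cong_open[OF op x]) (simp add: s0)
  also have "\<dots> = grad (\<lambda>z. h z / \<sigma> z) x \<bullet> (\<sigma> x *\<^sub>R grad u x)
      + (h x / \<sigma> x) * divg (\<lambda>y. \<sigma> y *\<^sub>R grad u y) x"
  proof (rule divg_scaleR)
    show "(\<lambda>z. h z / \<sigma> z) differentiable at x" using sd hd s0[OF x] by simp
    show "(\<lambda>y. \<sigma> y *\<^sub>R grad u y) differentiable at x"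
      using sd grad_differentiable[OF ud] by simp
  qed
  also have "divg (\<lambda>y. \<sigma> y *\<^sub>R grad u y) x = 0" using lu unfolding sigma_lap_def .
  finally show ?thesis by (simp add: inner_commute)
qed

lemma dirichlet_unique:
  fixes \<Omega> :: "'a::euclidean_space set" and \<sigma> :: "'a \<Rightarrow> real"
  assumes bd: "bounded \<Omega>" and op: "open \<Omega>"
    and sd: "\<And>y. y \<in> \<Omega> \<Longrightarrow> \<sigma> differentiable at y"
    and sb: "\<And>y b. y \<in> \<Omega> \<Longrightarrow> b \<in> Basis \<Longrightarrow> \<bar>dpart b \<sigma> y\<bar> \<le> B"
    and sp: "\<And>y. y \<in> closure \<Omega> \<Longrightarrow> \<sigma> y > 0" and sc: "continuous_on (closure \<Omega>) \<sigma>"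
    and d1: "dirichlet_sol \<Omega> \<sigma> g w1" and d2: "dirichlet_sol \<Omega> \<sigma> g w2"
  shows "w1 = w2"
proof
  fix x
  have fr: "\<And>x. x \<in> frontier \<Omega> \<Longrightarrow> x \<notin> \<Omega>" using op by (simp add: frontier_def interior_open)
  show "w1 x = w2 x"
  proof (cases "x \<in> \<Omega>")
    case True
    have "w1 x \<le> w2 x"
      by (rule max_principle[OF bd op sd sb sp sc, of w1 w2])
        (use d1 d2 fr True in \<open>auto simp: dirichlet_sol_def\<close>)
    moreover have "w2 x \<le> w1 x"
      by (rule max_principle[OF bd op sd sb sp sc, of w2 w1])
        (use d1 d2 fr True in \<open>auto simp: dirichlet_sol_def\<close>)
    ultimately show ?thesis by simp
  next
    case False
    then show ?thesis using d1 d2 by (simp add: dirichlet_sol_def)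
  qed
qed



theorem proposition2p1:
  fixes \<Omega> :: "'a::euclidean_space set"
    and \<sigma>0 u0 v0 f h :: "'a \<Rightarrow> real"
    and p \<alpha> :: real
  assumes "bounded \<Omega>" and "open \<Omega>" and "simply_connected \<Omega>" and "smooth_boundary \<Omega>"
    and "C2_closure \<Omega> \<sigma>0" and "\<forall>x\<in>closure \<Omega>. \<sigma>0 x > 0"
    and "0 < \<alpha>" and "\<alpha> < 1" and "C2alpha_boundary \<alpha> \<Omega> f"
    and "Ck_on 2 \<Omega> u0" and "continuous_on (closure \<Omega>) u0"
    and "\<forall>x\<in>\<Omega>. sigma_lap \<sigma>0 u0 x = 0"
    and "\<forall>x\<in>frontier \<Omega>. u0 x = f x"
    and "\<exists>G. continuous_on (closure \<Omega>) G \<and> (\<forall>x\<in>\<Omega>. G x = grad u0 x) \<and>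
              (\<forall>x\<in>closure \<Omega>. G x \<noteq> 0)"
    and "p > 0"
    and "C2_closure \<Omega> h"
    and "Ck_on 2 \<Omega> v0" and "continuous_on (closure \<Omega>) v0"
    and "\<forall>x\<in>\<Omega>. sigma_lap \<sigma>0 v0 x = - divg (\<lambda>y. h y *\<^sub>R grad u0 y) x"
    and "\<forall>x\<in>frontier \<Omega>. v0 x = 0"
  shows "\<forall>x\<in>\<Omega>.
    \<sigma>0 x * Top u0 (\<lambda>y. dF \<sigma>0 u0 p h v0 y / (\<sigma>0 y * norm (grad u0 y) powr p)) x
    = - Lop \<sigma>0 u0 p
          (dirichlet_inv \<Omega> \<sigma>0 (\<lambda>y. \<sigma>0 y * Top u0 (\<lambda>z. h z / \<sigma>0 z) y)) x"
proof -
  note bd = assms(1) and op = assms(2) and sC2 = assms(5) and spos = assms(6)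
    and u2 = assms(10) and lu = assms(12) and Gex = assms(14) and hC2 = assms(16)
    and v2 = assms(17) and vc = assms(18) and lv = assms(19) and vb = assms(20)
  have s2: "Ck_on 2 \<Omega> \<sigma>0" and sc: "continuous_on (closure \<Omega>) \<sigma>0"
    and suc: "\<And>b. b \<in> Basis \<Longrightarrow> uniformly_continuous_on \<Omega> (dpart b \<sigma>0)"
    using sC2 unfolding C2_closure_def by auto
  have h2: "Ck_on 2 \<Omega> h" using hC2 unfolding C2_closure_def by auto
  have inC: "\<And>y. y \<in> \<Omega> \<Longrightarrow> y \<in> closure \<Omega>" using closure_subset by blast
  have sp: "\<And>y. y \<in> closure \<Omega> \<Longrightarrow> \<sigma>0 y > 0" using spos by blast
  have s0: "\<And>y. y \<in> \<Omega> \<Longrightarrow> \<sigma>0 y \<noteq> 0" using sp inC by (metis less_irrefl)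
  have sd: "\<And>y. y \<in> \<Omega> \<Longrightarrow> \<sigma>0 differentiable at y" using Ck2_facts(1)[OF s2] by blast
  have "bounded (\<Union>b\<in>Basis. dpart b \<sigma>0 ` \<Omega>)"
    using suc bd bounded_uniformly_continuous_image by (intro bounded_UN) auto
  then obtain B where B: "\<And>y b. y \<in> \<Omega> \<Longrightarrow> b \<in> Basis \<Longrightarrow> \<bar>dpart b \<sigma>0 y\<bar> \<le> B"
    unfolding bounded_iff by fastforce
  have Nz: "grad u0 y \<noteq> 0" if "y \<in> \<Omega>" for y using Gex that inC by metis
  define \<rho> where "\<rho> = (\<lambda>z. h z / \<sigma>0 z)"
  define g where "g = (\<lambda>y. \<sigma>0 y * Top u0 \<rho> y)"
  define w0 where "w0 = (\<lambda>x. if x \<in> \<Omega> then - v0 x else 0)"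
  have fr: "\<And>x. x \<in> frontier \<Omega> \<Longrightarrow> x \<notin> \<Omega>" using op by (simp add: frontier_def interior_open)
  have K1: "divg (\<lambda>y. h y *\<^sub>R grad u0 y) x = \<sigma>0 x * (grad u0 x \<bullet> grad \<rho> x)" if x: "x \<in> \<Omega>" for x
    unfolding \<rho>_def
    by (rule div_h_gradu[OF op x sd[OF x] Ck2_facts(1)[OF h2 x] s0 Ck2_facts(2)[OF u2 x]])
      (use lu x in auto)
  have gw0: "grad w0 y = - grad v0 y" if y: "y \<in> \<Omega>" for y
  proof -
    have "grad w0 y = grad (\<lambda>y. - v0 y) y" by (rule grad_cong_open[OF op y]) (simp add: w0_def)
    also have "\<dots> = - grad v0 y" by (rule grad_neg[OF Ck2_facts(1)[OF v2 y]])
    finally show ?thesis .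
  qed
  have lw0: "sigma_lap \<sigma>0 w0 x = g x" if x: "x \<in> \<Omega>" for x
  proof -
    have "sigma_lap \<sigma>0 w0 x = divg (\<lambda>y. - (\<sigma>0 y *\<^sub>R grad v0 y)) x"
      unfolding sigma_lap_def by (rule divg_cong_open[OF op x]) (simp add: gw0)
    also have "\<dots> = - divg (\<lambda>y. \<sigma>0 y *\<^sub>R grad v0 y) x"
      by (rule divg_neg) (use sd[OF x] grad_differentiable[OF Ck2_facts(2)[OF v2 x]] in simp)
    also have "\<dots> = divg (\<lambda>y. h y *\<^sub>R grad u0 y) x" using lv x unfolding sigma_lap_def by simp
    also have "\<dots> = g x" unfolding g_def Top_def using K1[OF x] by simp
    finally show ?thesis .
  qed
  have dsol: "dirichlet_sol \<Omega> \<sigma>0 g w0"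
    unfolding dirichlet_sol_def
  proof (intro conjI allI impI ballI)
    show "Ck_on 2 \<Omega> w0"
      by (rule Ck_on_cong[OF op _ Ck_on_neg[OF op v2]]) (simp add: w0_def)
    have "continuous_on (closure \<Omega>) (\<lambda>y. - v0 y)" using vc by (rule continuous_on_minus)
    moreover have "\<And>y. y \<in> closure \<Omega> \<Longrightarrow> - v0 y = w0 y"
    proof -
      fix y assume y: "y \<in> closure \<Omega>"
      show "- v0 y = w0 y"
      proof (cases "y \<in> \<Omega>")
        case False
        then have "y \<in> frontier \<Omega>" using y op by (simp add: frontier_def interior_open)
        then show ?thesis using vb False by (simp add: w0_def)
      qed (simp add: w0_def)
    qed
    ultimately show "continuous_on (closure \<Omega>) w0" using continuous_on_cong by metis
    show "\<And>x. x \<in> \<Omega> \<Longrightarrow> sigma_lap \<sigma>0 w0 x = g x" by (rule lw0)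
    show "\<And>x. x \<notin> \<Omega> \<Longrightarrow> w0 x = 0" by (simp add: w0_def)
  qed
  have Weq: "dirichlet_inv \<Omega> \<sigma>0 g = w0"
    unfolding dirichlet_inv_def
  proof (rule the_equality)
    show "dirichlet_sol \<Omega> \<sigma>0 g w0" by (rule dsol)
    fix w assume "dirichlet_sol \<Omega> \<sigma>0 g w"
    then show "w = w0" using dirichlet_unique[OF bd op sd B sp sc _ dsol] by blast
  qed
  show ?thesis
  proof
    fix x assume x: "x \<in> \<Omega>"
    define R where "R = (\<lambda>y. (grad u0 y \<bullet> grad v0 y) / (grad u0 y \<bullet> grad u0 y))"
    define V where "V = (\<lambda>y. \<sigma>0 y *\<^sub>R grad u0 y)"
    have gud: "grad u0 differentiable at x" by (rule grad_differentiable[OF Ck2_facts(2)[OF u2 x]])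
    have gvd: "grad v0 differentiable at x" by (rule grad_differentiable[OF Ck2_facts(2)[OF v2 x]])
    have Rd: "R differentiable at x" unfolding R_def using gud gvd Nz[OF x] by simp
    have \<rho>d: "\<rho> differentiable at x" unfolding \<rho>_def using sd[OF x] Ck2_facts(1)[OF h2 x] s0[OF x] by simp
    have Vd: "V differentiable at x" unfolding V_def using sd[OF x] gud by simp
    have dV: "divg V x = 0" using lu x unfolding V_def sigma_lap_def by simp
    have Qeq: "dF \<sigma>0 u0 p h v0 y / (\<sigma>0 y * norm (grad u0 y) powr p) = \<rho> y + p * R y"
      if y: "y \<in> \<Omega>" for y
    proof -
      define N where "N = norm (grad u0 y)"
      have N: "N > 0" using Nz[OF y] unfolding N_def by simp
      have NN: "grad u0 y \<bullet> grad u0 y = N^2" unfolding N_def by (simp add: power2_norm_eq_inner)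
      have pw: "N powr (p - 2) = N powr p / N^2" using N by (simp add: powr_diff)
      have Pp: "N powr p > 0" using N by simp
      show ?thesis unfolding dF_def \<rho>_def R_def NN N_def[symmetric] pw
        using N Pp s0[OF y] by (simp add: field_simps)
    qed
    have gQ: "grad (\<lambda>y. dF \<sigma>0 u0 p h v0 y / (\<sigma>0 y * norm (grad u0 y) powr p)) x
        = grad \<rho> x + p *\<^sub>R grad R x"
    proof -
      have "grad (\<lambda>y. dF \<sigma>0 u0 p h v0 y / (\<sigma>0 y * norm (grad u0 y) powr p)) x
          = grad (\<lambda>y. \<rho> y + p * R y) x"
        by (rule grad_cong_open[OF op x]) (rule Qeq)
      also have "\<dots> = grad \<rho> x + p *\<^sub>R grad R x"
      proof (rule grad_of_deriv)
        have "((\<lambda>y. \<rho> y + p * R y) has_derivative (\<lambda>v. grad \<rho> x \<bullet> v + p * (grad R x \<bullet> v))) (at x)"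
          using deriv_grad[OF \<rho>d] deriv_grad[OF Rd] by (intro has_derivative_add has_derivative_mult_right)
        moreover have "(\<lambda>v. grad \<rho> x \<bullet> v + p * (grad R x \<bullet> v)) = (\<lambda>v. (grad \<rho> x + p *\<^sub>R grad R x) \<bullet> v)"
          by (rule ext) (simp add: inner_add_left)
        ultimately show "((\<lambda>y. \<rho> y + p * R y) has_derivative (\<lambda>v. (grad \<rho> x + p *\<^sub>R grad R x) \<bullet> v)) (at x)"
          by simp
      qed
      finally show ?thesis .
    qed
    have LHS: "\<sigma>0 x * Top u0 (\<lambda>y. dF \<sigma>0 u0 p h v0 y / (\<sigma>0 y * norm (grad u0 y) powr p)) x
        = \<sigma>0 x * (grad u0 x \<bullet> grad \<rho> x) + p * (\<sigma>0 x * (grad u0 x \<bullet> grad R x))"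
      unfolding Top_def gQ by (simp add: inner_add_right algebra_simps)
    have T1: "divg (\<lambda>y. \<sigma>0 y *\<^sub>R grad w0 y) x = \<sigma>0 x * (grad u0 x \<bullet> grad \<rho> x)"
      using lw0[OF x] unfolding sigma_lap_def g_def Top_def .
    have T2: "divg (\<lambda>y. (\<sigma>0 y * (grad u0 y \<bullet> grad w0 y) / (norm (grad u0 y))\<^sup>2) *\<^sub>R grad u0 y) x
        = - (\<sigma>0 x * (grad u0 x \<bullet> grad R x))"
    proof -
      have "divg (\<lambda>y. (\<sigma>0 y * (grad u0 y \<bullet> grad w0 y) / (norm (grad u0 y))\<^sup>2) *\<^sub>R grad u0 y) x
          = divg (\<lambda>y. (- R y) *\<^sub>R V y) x"
      proof (rule divg_cong_open[OF op x])
        fix y assume y: "y \<in> \<Omega>"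
        show "(\<sigma>0 y * (grad u0 y \<bullet> grad w0 y) / (norm (grad u0 y))\<^sup>2) *\<^sub>R grad u0 y = (- R y) *\<^sub>R V y"
          unfolding R_def V_def gw0[OF y] by (simp add: power2_norm_eq_inner)
      qed
      also have "\<dots> = grad (\<lambda>y. - R y) x \<bullet> V x + (- R x) * divg V x"
        by (rule divg_scaleR) (use Rd Vd in simp_all)
      also have "\<dots> = - (\<sigma>0 x * (grad u0 x \<bullet> grad R x))"
        unfolding grad_neg[OF Rd] dV by (simp add: V_def inner_commute)
      finally show ?thesis .
    qed
    show "\<sigma>0 x * Top u0 (\<lambda>y. dF \<sigma>0 u0 p h v0 y / (\<sigma>0 y * norm (grad u0 y) powr p)) x
      = - Lop \<sigma>0 u0 p (dirichlet_inv \<Omega> \<sigma>0 (\<lambda>y. \<sigma>0 y * Top u0 (\<lambda>z. h z / \<sigma>0 z) y)) x"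
      unfolding LHS Weq[unfolded g_def \<rho>_def] Lop_def T1[unfolded \<rho>_def] T2
      by (simp add: \<rho>_def)
  qed
qed

end
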